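(* Let $\mathcal{P}=(|K|,V)$ be a polyhedral model. For all $x\in|K|$ and every SLCS$_\eta$ formula $\Phi$: $\mathcal{P},x\models\Phi$ (SLCS$_\eta$ semantics on polyhedral models) if and only if $\mathbb{F}(\mathcal{P}),\mathbb{F}(x)\models\mathcal{E}(\Phi)$ (SLCS$_\gamma$ semantics on poset models).
   Context: Fix a set PL of proposition letters. A simplex $\sigma\subseteq\mathbb{R}^m$ is the convex hull of $d+1$ affinely independent points $v_0,\dots,v_d$; its faces are the simplices spanned by nonempty subsets of its vertices. Its relative interior (cell) is $\tilde\sigma=\{\sum_i\lambda_iv_i:\lambda_i\in(0,1],\sum_i\lambda_i=1\}$. A simplicial complex $K$ is a finite set of simplices in $\mathbb{R}^m$ closed under faces, any two of which intersect in a common face or in $\emptyset$. Its set of cells $\tilde K=\{\tilde\sigma:\sigma\in K\}$ is partially ordered by $\tilde\sigma_1\preceq\tilde\sigma_2$ iff $\tilde\sigma_1$ is contained in the topological closure of $\tilde\sigma_2$ (equivalently, $\sigma_1$ is a face of $\sigma_2$). The polyhedron $|K|$ is the union of the simplices of $K$ with the subspace topology; its cells partition $|K|$. A polyhedral model is $\mathcal{P}=(|K|,V)$ with $V:\mathrm{PL}\to\mathcal{P}(|K|)$ such that each $V(p)$ is a union of cells. Its cell poset model is $\mathbb{F}(\mathcal{P})=(\tilde K,\preceq,\mathcal{V})$ with $\tilde\sigma\in\mathcal{V}(p)$ iff $\tilde\sigma\subseteq V(p)$; for $x\in|K|$, $\mathbb{F}(x)$ is the unique cell containing $x$. A topological path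 from $x$ is a continuous $\pi:[0,1]\to|K|$ with $\pi(0)=x$. In a poset $(W,\preceq)$ a $\pm$-path of length $\ell\ge2$ from $w$ is $\pi:\{0,\dots,\ell\}\to W$ with $\pi(0)=w$, consecutive elements comparable under $\preceq$, $\pi(0)\preceq\pi(1)$ and $\pi(\ell)\preceq\pi(\ell-1)$. Formulas: $\Phi::=p\mid\neg\Phi\mid\Phi_1\wedge\Phi_2\mid M(\Phi_1,\Phi_2)$, $M=\eta$ for SLCS$_\eta$, $M=\gamma$ for SLCS$_\gamma$. On polyhedral models: $x\models p$ iff $x\in V(p)$; $x\models\gamma(\Phi_1,\Phi_2)$ iff some topological path $\pi$ from $x$ has $\pi(1)\models\Phi_2$ and $\pi(r)\models\Phi_1$ for all $r\in(0,1)$; $x\models\eta(\Phi_1,\Phi_2)$ iff the same with $r\in[0,1)$. On poset models $(W,\preceq,\mathcal{V})$: $w\models p$ iff $w\in\mathcal{V}(p)$; $w\models\gamma(\Phi_1,\Phi_2)$ iff some $\pm$-path $\pi$ of length $\ell$ from $w$ has $\pi(\ell)\models\Phi_2$ and $\pi(i)\models\Phi_1$ for $0<i<\ell$; $w\models\eta(\Phi_1,\Phi_2)$ iff the same with $0\le i<\ell$. Negation and conjunction are standard. The encoding $\mathcal{E}$: $\mathcal{E}(p)=p$, $\mathcal{E}(\neg\Phi)=\neg\mathcal{E}(\Phi)$, $\mathcal{E}(\Phi_1\wedge\Phi_2)=\mathcal{E}(\Phi_1)\wedge\mathcal{E}(\Phi_2)$, $\mathcal{E}(\eta(\Phi_1,\Phi_2))=\mathcal{E}(\Phi_1)\wedge\gamma(\mathcal{E}(\Phi_1),\mathcal{E}(\Phi_2))$.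 *)

theory Defs
  imports "HOL-Analysis.Analysis"
begin

text \<open>A simplex is represented by its (finite, nonempty, affinely independent) vertex set S;
  the simplex itself is convex hull S.\<close>

definition simplex_vertices :: "'a::euclidean_space set \<Rightarrow> bool" where
  "simplex_vertices S \<longleftrightarrow> finite S \<and> S \<noteq> {} \<and> \<not> affine_dependent S"

definition simplicial_complex :: "'a::euclidean_space set set \<Rightarrow> bool" where
  "simplicial_complex K \<longleftrightarrow>
     finite K \<and>
     (\<forall>S\<in>K. simplex_vertices S) \<and>
     (\<forall>S\<in>K. \<forall>T. T \<subseteq> S \<and> T \<noteq> {} \<longrightarrow> T \<in> K) \<and>
     (\<forall>S\<in>K. \<forall>T\<in>K. convex hull S \<inter> convex hull T = {} \<or>
        (\<exists>U. U \<noteq> {} \<and> U \<subseteq> S \<and> U \<subseteq> T \<and> convex hull S \<inter> convex hull T = convex hull U))"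

definition cell :: "'a::euclidean_space set \<Rightarrow> 'a set" where
  "cell S = {x. \<exists>l. (\<forall>v\<in>S. 0 < l v \<and> l v \<le> 1) \<and> sum l S = 1 \<and> (\<Sum>v\<in>S. l v *\<^sub>R v) = x}"

definition polyhedron :: "'a::euclidean_space set set \<Rightarrow> 'a set" where
  "polyhedron K = \<Union> ((\<lambda>S. convex hull S) ` K)"

definition cells :: "'a::euclidean_space set set \<Rightarrow> 'a set set" where
  "cells K = cell ` K"

definition cell_le :: "'a::euclidean_space set \<Rightarrow> 'a set \<Rightarrow> bool" where
  "cell_le c1 c2 \<longleftrightarrow> c1 \<subseteq> closure c2"

definition polyhedral_model :: "'a::euclidean_space set set \<Rightarrow> ('p \<Rightarrow> 'a set) \<Rightarrow> bool" where
  "polyhedral_model K V \<longleftrightarrow> simplicial_complex K \<and>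
     (\<forall>p. \<exists>C. C \<subseteq> cells K \<and> V p = \<Union>C)"

text \<open>Valuation of the cell poset model F(P).\<close>
definition cell_val :: "'a::euclidean_space set set \<Rightarrow> ('p \<Rightarrow> 'a set) \<Rightarrow> 'p \<Rightarrow> 'a set set" where
  "cell_val K V p = {c \<in> cells K. c \<subseteq> V p}"

definition cell_of :: "'a::euclidean_space set set \<Rightarrow> 'a \<Rightarrow> 'a set" where
  "cell_of K x = (THE c. c \<in> cells K \<and> x \<in> c)"

datatype 'p form =
    Atom 'p
  | Neg "'p form"
  | Conj "'p form" "'p form"
  | Eta "'p form" "'p form"
  | Gamma "'p form" "'p form"

fun eta_formula :: "'p form \<Rightarrow> bool" where
  "eta_formula (Atom p) = True"
| "eta_formula (Neg f) = eta_formula f"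
| "eta_formula (Conj f g) = (eta_formula f \<and> eta_formula g)"
| "eta_formula (Eta f g) = (eta_formula f \<and> eta_formula g)"
| "eta_formula (Gamma f g) = False"

text \<open>Encoding E (on SLCS_eta formulas; gamma is mapped homomorphically for totality).\<close>
fun enc :: "'p form \<Rightarrow> 'p form" where
  "enc (Atom p) = Atom p"
| "enc (Neg f) = Neg (enc f)"
| "enc (Conj f g) = Conj (enc f) (enc g)"
| "enc (Eta f g) = Conj (enc f) (Gamma (enc f) (enc g))"
| "enc (Gamma f g) = Gamma (enc f) (enc g)"

definition top_path :: "'a::euclidean_space set set \<Rightarrow> 'a \<Rightarrow> (real \<Rightarrow> 'a) \<Rightarrow> bool" where
  "top_path K x \<pi> \<longleftrightarrow> continuous_on {0..1} \<pi> \<and> \<pi> ` {0..1} \<subseteq> polyhedron K \<and> \<pi> 0 = x"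

fun sat_poly :: "'a::euclidean_space set set \<Rightarrow> ('p \<Rightarrow> 'a set) \<Rightarrow> 'a \<Rightarrow> 'p form \<Rightarrow> bool" where
  "sat_poly K V x (Atom p) = (x \<in> V p)"
| "sat_poly K V x (Neg f) = (\<not> sat_poly K V x f)"
| "sat_poly K V x (Conj f g) = (sat_poly K V x f \<and> sat_poly K V x g)"
| "sat_poly K V x (Gamma f g) = (\<exists>\<pi>. top_path K x \<pi> \<and> sat_poly K V (\<pi> 1) g \<and>
       (\<forall>r\<in>{0<..<1}. sat_poly K V (\<pi> r) f))"
| "sat_poly K V x (Eta f g) = (\<exists>\<pi>. top_path K x \<pi> \<and> sat_poly K V (\<pi> 1) g \<and>
       (\<forall>r\<in>{0..<1}. sat_poly K V (\<pi> r) f))"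

definition pm_path :: "'w set \<Rightarrow> ('w \<Rightarrow> 'w \<Rightarrow> bool) \<Rightarrow> 'w \<Rightarrow> nat \<Rightarrow> (nat \<Rightarrow> 'w) \<Rightarrow> bool" where
  "pm_path W le w l \<pi> \<longleftrightarrow> 2 \<le> l \<and> \<pi> 0 = w \<and> (\<forall>i\<le>l. \<pi> i \<in> W) \<and>
     (\<forall>i<l. le (\<pi> i) (\<pi> (Suc i)) \<or> le (\<pi> (Suc i)) (\<pi> i)) \<and>
     le (\<pi> 0) (\<pi> 1) \<and> le (\<pi> l) (\<pi> (l - 1))"

fun sat_poset :: "'w set \<Rightarrow> ('w \<Rightarrow> 'w \<Rightarrow> bool) \<Rightarrow> ('p \<Rightarrow> 'w set) \<Rightarrow> 'w \<Rightarrow> 'p form \<Rightarrow> bool" where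
  "sat_poset W le V w (Atom p) = (w \<in> V p)"
| "sat_poset W le V w (Neg f) = (\<not> sat_poset W le V w f)"
| "sat_poset W le V w (Conj f g) = (sat_poset W le V w f \<and> sat_poset W le V w g)"
| "sat_poset W le V w (Gamma f g) = (\<exists>l \<pi>. pm_path W le w l \<pi> \<and> sat_poset W le V (\<pi> l) g \<and>
       (\<forall>i. 0 < i \<and> i < l \<longrightarrow> sat_poset W le V (\<pi> i) f))"
| "sat_poset W le V w (Eta f g) = (\<exists>l \<pi>. pm_path W le w l \<pi> \<and> sat_poset W le V (\<pi> l) g \<and>
       (\<forall>i. i < l \<longrightarrow> sat_poset W le V (\<pi> i) f))"

end

theory Submission
  imports Defs
begin

lemma sc_simplex: "simplicial_complex K \<Longrightarrow> S \<in> K \<Longrightarrow> finite S \<and> S \<noteq> {} \<and> \<not> affine_dependent S"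
  unfolding simplicial_complex_def simplex_vertices_def by blast

lemma sc_finite: "simplicial_complex K \<Longrightarrow> finite K"
  unfolding simplicial_complex_def by blast

lemma sc_face: "simplicial_complex K \<Longrightarrow> S \<in> K \<Longrightarrow> T \<subseteq> S \<Longrightarrow> T \<noteq> {} \<Longrightarrow> T \<in> K"
  unfolding simplicial_complex_def by blast

lemma sc_int: "simplicial_complex K \<Longrightarrow> S \<in> K \<Longrightarrow> T \<in> K \<Longrightarrow> convex hull S \<inter> convex hull T = {} \<or>
        (\<exists>U. U \<noteq> {} \<and> U \<subseteq> S \<and> U \<subseteq> T \<and> convex hull S \<inter> convex hull T = convex hull U)"
  unfolding simplicial_complex_def by blast

lemma coeff_unique:
  fixes T :: "'a::euclidean_space set"
  assumes "finite T" "\<not> affine_dependent T" "sum a T = 1" "sum b T = 1"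
    "(\<Sum>v\<in>T. a v *\<^sub>R v) = (\<Sum>v\<in>T. b v *\<^sub>R v)" "v \<in> T"
  shows "a v = b v"
proof (rule ccontr)
  assume "a v \<noteq> b v"
  have "sum (\<lambda>w. a w - b w) T = 0" using assms by (simp add: sum_subtractf)
  moreover have "(\<Sum>w\<in>T. (a w - b w) *\<^sub>R w) = 0"
    using assms(5) by (simp add: scaleR_diff_left sum_subtractf)
  ultimately have "affine_dependent T"
    unfolding affine_dependent_explicit_finite[OF assms(1)]
    using \<open>a v \<noteq> b v\<close> assms(6) by (intro exI[of _ "\<lambda>w. a w - b w"]) auto
  with assms(2) show False by simp
qed

lemma cell_rel_interior:
  fixes S :: "'a::euclidean_space set"
  assumes "finite S" "\<not> affine_dependent S"
  shows "cell S = rel_interior (convex hull S)"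
  unfolding rel_interior_convex_hull_explicit[OF assms(2)] cell_def
proof safe
  fix u :: "'a \<Rightarrow> real" assume u: "\<forall>x\<in>S. 0 < u x" "sum u S = 1"
  have "u v \<le> 1" if "v \<in> S" for v
  proof -
    have "u v \<le> sum u S" using that u assms(1)
      by (intro member_le_sum) auto
    then show ?thesis using u by simp
  qed
  then show "\<exists>l. (\<forall>v\<in>S. 0 < l v \<and> l v \<le> 1) \<and> sum l S = 1 \<and> (\<Sum>v\<in>S. l v *\<^sub>R v) = (\<Sum>x\<in>S. u x *\<^sub>R x)"
    using u by blast
qed blast

lemma cell_sub_hull:
  fixes S :: "'a::euclidean_space set"
  assumes "finite S" "\<not> affine_dependent S"
  shows "cell S \<subseteq> convex hull S"
  using cell_rel_interior[OF assms] rel_interior_subset by blast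

lemma closure_cell:
  fixes S :: "'a::euclidean_space set"
  assumes "finite S" "\<not> affine_dependent S"
  shows "closure (cell S) = convex hull S"
  using cell_rel_interior[OF assms] convex_closure_rel_interior[of "convex hull S"]
  by (simp add: assms(1) finite_imp_compact convex_convex_hull)

lemma cell_nonempty:
  fixes S :: "'a::euclidean_space set"
  assumes "finite S" "\<not> affine_dependent S" "S \<noteq> {}"
  shows "cell S \<noteq> {}"
  using cell_rel_interior[OF assms(1,2)] rel_interior_eq_empty[of "convex hull S"] assms
  by (simp add: convex_convex_hull)

lemma key_face:
  fixes K :: "'a::euclidean_space set set"
  assumes K: "simplicial_complex K" and S: "S \<in> K" and T: "T \<in> K"
    and y: "y \<in> cell T" "y \<in> convex hull S"
  shows "T \<subseteq> S"
proof -
  have fT: "finite T" "\<not> affine_dependent T" using sc_simplex[OF K T] by auto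
  have "y \<in> convex hull T" using cell_sub_hull[OF fT] y by blast
  then obtain U where U: "U \<noteq> {}" "U \<subseteq> S" "U \<subseteq> T" "convex hull S \<inter> convex hull T = convex hull U"
    using sc_int[OF K S T] y by blast
  have fU: "finite U" using U fT finite_subset by blast
  have "y \<in> convex hull U" using U y \<open>y \<in> convex hull T\<close> by blast
  then obtain m where m: "\<forall>x\<in>U. 0 \<le> m x" "sum m U = 1" "(\<Sum>x\<in>U. m x *\<^sub>R x) = y"
    using convex_hull_finite[OF fU] by blast
  obtain l where l: "\<forall>v\<in>T. 0 < l v \<and> l v \<le> 1" "sum l T = 1" "(\<Sum>v\<in>T. l v *\<^sub>R v) = y"
    using y(1) unfolding cell_def by blast
  define m' where "m' v = (if v \<in> U then m v else 0)" for v
  have s1: "sum m' T = 1"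
  proof -
    have "sum m' T = sum m' U" using U(3) fT(1) by (intro sum.mono_neutral_right) (auto simp: m'_def)
    also have "\<dots> = 1" using m by (simp add: m'_def)
    finally show ?thesis .
  qed
  have s2: "(\<Sum>v\<in>T. m' v *\<^sub>R v) = y"
  proof -
    have "(\<Sum>v\<in>T. m' v *\<^sub>R v) = (\<Sum>v\<in>U. m' v *\<^sub>R v)"
      using U(3) fT(1) by (intro sum.mono_neutral_right) (auto simp: m'_def)
    also have "\<dots> = y" using m by (simp add: m'_def)
    finally show ?thesis .
  qed
  show "T \<subseteq> S"
  proof
    fix v assume v: "v \<in> T"
    have "l v = m' v" using coeff_unique[OF fT l(2) s1 _ v] l(3) s2 by simp
    then have "v \<in> U" using l(1) v by (auto simp: m'_def split: if_splits)
    then show "v \<in> S" using U by blast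
  qed
qed


lemma cell_disjoint:
  fixes K :: "'a::euclidean_space set set"
  assumes K: "simplicial_complex K" and S: "S \<in> K" and T: "T \<in> K"
    and y: "y \<in> cell S" "y \<in> cell T"
  shows "S = T"
proof -
  have "y \<in> convex hull S" "y \<in> convex hull T"
    using y cell_sub_hull sc_simplex[OF K S] sc_simplex[OF K T] by blast+
  then show ?thesis using key_face[OF K S T] key_face[OF K T S] y by blast
qed

lemma cell_of_eq:
  fixes K :: "'a::euclidean_space set set"
  assumes K: "simplicial_complex K" and c: "c \<in> cells K" and y: "y \<in> c"
  shows "cell_of K y = c"
  unfolding cell_of_def
proof (rule the_equality)
  show "c \<in> cells K \<and> y \<in> c" using c y by blast
next
  fix d assume "d \<in> cells K \<and> y \<in> d"
  then show "d = c" using c y cell_disjoint[OF K] unfolding cells_def by blast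
qed

lemma poly_cell:
  fixes K :: "'a::euclidean_space set set"
  assumes K: "simplicial_complex K" and x: "x \<in> polyhedron K"
  shows "\<exists>T\<in>K. x \<in> cell T"
proof -
  obtain S where S: "S \<in> K" "x \<in> convex hull S" using x unfolding polyhedron_def by blast
  have fS: "finite S" "\<not> affine_dependent S" using sc_simplex[OF K S(1)] by auto
  obtain u where u: "\<forall>x\<in>S. 0 \<le> u x" "sum u S = 1" "(\<Sum>v\<in>S. u v *\<^sub>R v) = x"
    using S(2) convex_hull_finite[OF fS(1)] by blast
  define T where "T = {v\<in>S. u v \<noteq> 0}"
  have TS: "T \<subseteq> S" by (auto simp: T_def)
  have fT: "finite T" using fS TS finite_subset by blast
  have "sum u S = sum u T" using fS(1) TS by (intro sum.mono_neutral_right) (auto simp: T_def)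
  then have sT: "sum u T = 1" using u(2) by simp
  have "(\<Sum>v\<in>S. u v *\<^sub>R v) = (\<Sum>v\<in>T. u v *\<^sub>R v)" using fS(1) TS
    by (intro sum.mono_neutral_right) (auto simp: T_def)
  then have xT: "(\<Sum>v\<in>T. u v *\<^sub>R v) = x" using u(3) by simp
  have "T \<noteq> {}" using sT by auto
  then have "T \<in> K" using sc_face[OF K S(1) TS] by blast
  moreover have "u v \<le> 1" if "v \<in> T" for v
  proof -
    have "u v \<le> sum u T" using that u fT TS by (intro member_le_sum) auto
    then show ?thesis using sT by simp
  qed
  then have "x \<in> cell T" unfolding cell_def using u(1) TS sT xT
    by (intro CollectI exI[of _ u]) (force simp: T_def)
  ultimately show ?thesis by blast
qed

lemma cell_of_in:
  fixes K :: "'a::euclidean_space set set"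
  assumes K: "simplicial_complex K" and x: "x \<in> polyhedron K"
  shows "cell_of K x \<in> cells K \<and> x \<in> cell_of K x"
proof -
  obtain T where "T \<in> K" "x \<in> cell T" using poly_cell[OF K x] by blast
  then have "cell T \<in> cells K" by (auto simp: cells_def)
  then show ?thesis using cell_of_eq[OF K _ \<open>x \<in> cell T\<close>] \<open>x \<in> cell T\<close> by simp
qed

lemma cells_sub_poly:
  fixes K :: "'a::euclidean_space set set"
  assumes K: "simplicial_complex K" and c: "c \<in> cells K"
  shows "c \<subseteq> polyhedron K"
  using c cell_sub_hull sc_simplex[OF K] unfolding cells_def polyhedron_def by blast

lemma cells_nonempty:
  fixes K :: "'a::euclidean_space set set"
  assumes K: "simplicial_complex K" and c: "c \<in> cells K"
  shows "c \<noteq> {}"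
  using c cell_nonempty sc_simplex[OF K] unfolding cells_def by blast

lemma finite_cells: "simplicial_complex K \<Longrightarrow> finite (cells K)"
  unfolding cells_def using sc_finite by blast

lemma cell_le_closure:
  fixes K :: "'a::euclidean_space set set"
  assumes K: "simplicial_complex K" and c: "c \<in> cells K" and d: "d \<in> cells K"
    and y: "y \<in> c" "y \<in> closure d"
  shows "cell_le c d"
proof -
  obtain S T where S: "S \<in> K" "d = cell S" and T: "T \<in> K" "c = cell T"
    using c d unfolding cells_def by blast
  have fS: "finite S" "\<not> affine_dependent S" and fT: "finite T" "\<not> affine_dependent T"
    using sc_simplex[OF K S(1)] sc_simplex[OF K T(1)] by auto
  have "y \<in> convex hull S" using y S closure_cell[OF fS] by simp
  then have "T \<subseteq> S" using key_face[OF K S(1) T(1)] y T by blast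
  then have "c \<subseteq> convex hull S" using cell_sub_hull[OF fT] T hull_mono by blast
  then show ?thesis unfolding cell_le_def using S closure_cell[OF fS] by simp
qed

lemma seg_up:
  fixes K :: "'a::euclidean_space set set"
  assumes K: "simplicial_complex K" and d: "d \<in> cells K"
    and le: "cell_le c d" and a: "a \<in> c" and b: "b \<in> d" and t: "0 < t" "t \<le> 1"
  shows "linepath a b t \<in> d"
proof -
  obtain S where S: "S \<in> K" "d = cell S" using d unfolding cells_def by blast
  have fS: "finite S" "\<not> affine_dependent S" using sc_simplex[OF K S(1)] by auto
  have "a \<in> closure (convex hull S)" using le a S closure_cell[OF fS] unfolding cell_le_def
    using closure_subset by fastforce
  then have "a - t *\<^sub>R (a - b) \<in> rel_interior (convex hull S)"
    using b S cell_rel_interior[OF fS] t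
    by (intro rel_interior_closure_convex_shrink) auto
  moreover have "a - t *\<^sub>R (a - b) = linepath a b t"
    by (simp add: linepath_def algebra_simps)
  ultimately show ?thesis using S cell_rel_interior[OF fS] by simp
qed

lemma seg_down:
  fixes K :: "'a::euclidean_space set set"
  assumes K: "simplicial_complex K" and c: "c \<in> cells K"
    and le: "cell_le d c" and a: "a \<in> c" and b: "b \<in> d" and t: "0 \<le> t" "t < 1"
  shows "linepath a b t \<in> c"
proof -
  have "linepath b a (1 - t) \<in> c" using seg_up[OF K c le b a] t by simp
  moreover have "linepath b a (1 - t) = linepath a b t" by (simp add: linepath_def algebra_simps)
  ultimately show ?thesis by simp
qed


lemma join_step:
  fixes g \<pi> :: "real \<Rightarrow> 'a::euclidean_space"
  assumes P: "top_path K x \<pi>" "\<pi> 1 = y" "\<forall>r\<in>{0..<1}. F1 (\<pi> r)"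
    and g: "g 0 = y" "continuous_on {0..1} g" "g ` {0..1} \<subseteq> polyhedron K" "\<forall>r\<in>{0..<1}. F1 (g r)"
  shows "\<exists>\<pi>'. top_path K x \<pi>' \<and> \<pi>' 1 = g 1 \<and> (\<forall>r\<in>{0..<1}. F1 (\<pi>' r))"
proof (intro exI conjI)
  have pf: "pathfinish \<pi> = pathstart g" using P g by (simp add: pathfinish_def pathstart_def)
  have "path \<pi>" "path g" using P(1) g(2) by (simp_all add: path_def top_path_def)
  then have "path (\<pi> +++ g)" using pf by (rule path_join_imp)
  moreover have "path_image (\<pi> +++ g) \<subseteq> polyhedron K"
    using path_image_join[OF pf] P(1) g(3) by (simp add: path_image_def top_path_def)
  ultimately show "top_path K x (\<pi> +++ g)" using P(1)
    by (simp add: top_path_def path_def path_image_def joinpaths_def)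
  show "(\<pi> +++ g) 1 = g 1" by (simp add: joinpaths_def)
  show "\<forall>r\<in>{0..<1}. F1 ((\<pi> +++ g) r)"
  proof
    fix r :: real assume r: "r \<in> {0..<1}"
    show "F1 ((\<pi> +++ g) r)"
    proof (cases "r \<le> 1/2")
      case True
      show ?thesis
      proof (cases "2 * r < 1")
        case True then show ?thesis using r P(3) \<open>r \<le> 1/2\<close> by (simp add: joinpaths_def)
      next
        case False then have "2 * r = 1" using \<open>r \<le> 1/2\<close> by simp
        moreover have "F1 (g 0)" using g(4) by simp
        ultimately show ?thesis using P g(1) \<open>r \<le> 1/2\<close> by (simp add: joinpaths_def)
      qed
    next
      case False then show ?thesis using r g(4) by (simp add: joinpaths_def)
    qed
  qed
qed

lemma linepath_poly:
  fixes K :: "'a::euclidean_space set set"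
  assumes K: "simplicial_complex K" and c: "c \<in> cells K" and d: "d \<in> cells K"
    and cmp: "cell_le c d \<or> cell_le d c" and a: "a \<in> c" and b: "b \<in> d"
    and t: "0 \<le> t" "t \<le> 1"
  shows "linepath a b t \<in> c \<union> d"
proof (cases "t = 0 \<or> t = 1")
  case True then show ?thesis using a b by (auto simp: linepath_def)
next
  case False
  then have "0 < t" "t < 1" using t by auto
  then show ?thesis using cmp seg_up[OF K d _ a b] seg_down[OF K c _ a b] by auto
qed

lemma backward:
  fixes K :: "'a::euclidean_space set set"
  assumes K: "simplicial_complex K" and x: "x \<in> polyhedron K"
    and E1: "\<And>c y. c \<in> cells K \<Longrightarrow> y \<in> c \<Longrightarrow> F1 y = G1 c"
    and E2: "\<And>c y. c \<in> cells K \<Longrightarrow> y \<in> c \<Longrightarrow> F2 y = G2 c"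
    and F1x: "F1 x"
    and pm: "pm_path (cells K) cell_le (cell_of K x) l \<rho>"
    and G2l: "G2 (\<rho> l)" and G1i: "\<forall>i. 0 < i \<and> i < l \<longrightarrow> G1 (\<rho> i)"
  shows "\<exists>\<pi>. top_path K x \<pi> \<and> F2 (\<pi> 1) \<and> (\<forall>r\<in>{0..<1}. F1 (\<pi> r))"
proof -
  have l2: "2 \<le> l" and r0: "\<rho> 0 = cell_of K x" and rin: "\<And>i. i \<le> l \<Longrightarrow> \<rho> i \<in> cells K"
    and cmp: "\<And>i. i < l \<Longrightarrow> cell_le (\<rho> i) (\<rho> (Suc i)) \<or> cell_le (\<rho> (Suc i)) (\<rho> i)"
    and last: "cell_le (\<rho> l) (\<rho> (l - 1))"
    using pm unfolding pm_path_def by auto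
  have xc: "cell_of K x \<in> cells K" "x \<in> cell_of K x" using cell_of_in[OF K x] by auto
  have G1all: "G1 (\<rho> i)" if "i < l" for i
  proof (cases "i = 0")
    case True then show ?thesis using E1[OF xc] F1x r0 by simp
  next
    case False then show ?thesis using G1i that by simp
  qed
  have F1in: "F1 y" if "i < l" "y \<in> \<rho> i" for i y
    using E1[OF rin[of i] that(2)] G1all[OF that(1)] that(1) by simp
  define P where "P y \<longleftrightarrow> (\<exists>\<pi>. top_path K x \<pi> \<and> \<pi> 1 = y \<and> (\<forall>r\<in>{0..<1}. F1 (\<pi> r)))" for y
  have Px: "P x" unfolding P_def
    using F1x x by (intro exI[of _ "\<lambda>_. x"]) (auto simp: top_path_def)
  have seg: "P (linepath a b 1)"
    if "P a" "i < l" "a \<in> \<rho> i" "b \<in> \<rho> (Suc i)"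
       "\<forall>t\<in>{0..<1}. F1 (linepath a b t)" for a b i
  proof -
    have pa: "linepath a b t \<in> polyhedron K" if "t \<in> {0..1}" for t
      using linepath_poly[OF K rin[of i] rin[of "Suc i"] cmp[of i] \<open>a \<in> \<rho> i\<close> \<open>b \<in> \<rho> (Suc i)\<close>]
        that \<open>i < l\<close> cells_sub_poly[OF K rin[of i]] cells_sub_poly[OF K rin[of "Suc i"]] by auto
    obtain \<pi> where \<pi>: "top_path K x \<pi>" "\<pi> 1 = a" "\<forall>r\<in>{0..<1}. F1 (\<pi> r)"
      using \<open>P a\<close> unfolding P_def by blast
    have "\<exists>\<pi>'. top_path K x \<pi>' \<and> \<pi>' 1 = linepath a b 1 \<and> (\<forall>r\<in>{0..<1}. F1 (\<pi>' r))"
      by (rule join_step[OF \<pi>]) (use pa that(5) in \<open>auto simp: linepath_0'\<close>)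
    then show ?thesis unfolding P_def by blast
  qed
  have inv: "\<exists>y\<in>\<rho> i. P y" if "i \<le> l - 1" for i
    using that
  proof (induction i)
    case 0 then show ?case using Px r0 xc by auto
  next
    case (Suc i)
    then obtain y where y: "y \<in> \<rho> i" "P y" by auto
    obtain b where b: "b \<in> \<rho> (Suc i)" using cells_nonempty[OF K rin[of "Suc i"]] Suc.prems by fastforce
    have il: "i < l" "Suc i < l" using Suc.prems l2 by auto
    have "\<forall>t\<in>{0..<1}. F1 (linepath y b t)"
    proof
      fix t :: real assume t: "t \<in> {0..<1}"
      have "linepath y b t \<in> \<rho> i \<union> \<rho> (Suc i)"
        using linepath_poly[OF K rin[of i] rin[of "Suc i"] cmp[of i] y(1) b] t il by auto
      then show "F1 (linepath y b t)" using F1in il by blast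
    qed
    then have "P (linepath y b 1)" using seg[OF y(2) il(1) y(1) b] by blast
    then show ?case using b by (auto simp: linepath_def)
  qed
  obtain y where y: "y \<in> \<rho> (l - 1)" "P y" using inv[of "l - 1"] by auto
  obtain z where z: "z \<in> \<rho> l" using cells_nonempty[OF K rin[of l]] by auto
  have l1: "l - 1 < l" "Suc (l - 1) = l" using l2 by auto
  have segd: "linepath y z t \<in> \<rho> (l - 1)" if "t \<in> {0..<1}" for t
    using seg_down[OF K rin[of "l - 1"] last y(1) z] that by auto
  have "\<forall>t\<in>{0..<1}. F1 (linepath y z t)" using segd F1in l1 by blast
  then have "P (linepath y z 1)" using seg[OF y(2) l1(1) y(1)] z l1 by auto
  then have "P z" by (simp add: linepath_def)
  moreover have "F2 z" using E2[OF rin[of l] z] G2l by simp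
  ultimately show ?thesis unfolding P_def by blast
qed


definition chain :: "'a::euclidean_space set set \<Rightarrow> 'a set \<Rightarrow> 'a set \<Rightarrow> bool" where
  "chain C a c \<longleftrightarrow> (\<exists>n f. f 0 = a \<and> f n = c \<and> (\<forall>i\<le>n. f i \<in> C) \<and>
      (\<forall>i<n. cell_le (f i) (f (Suc i)) \<or> cell_le (f (Suc i)) (f i)))"

lemma chain_refl: "a \<in> C \<Longrightarrow> chain C a a"
  unfolding chain_def by (intro exI[of _ 0] exI[of _ "\<lambda>_. a"]) auto

lemma chain_step:
  assumes "chain C a c" "d \<in> C" "cell_le c d \<or> cell_le d c"
  shows "chain C a d"
proof -
  obtain n f where f: "f 0 = a" "f n = c" "\<forall>i\<le>n. f i \<in> C"
    "\<forall>i<n. cell_le (f i) (f (Suc i)) \<or> cell_le (f (Suc i)) (f i)"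
    using assms(1) unfolding chain_def by blast
  define g where "g = f(Suc n := d)"
  have "g 0 = a" "g (Suc n) = d" using f by (auto simp: g_def)
  moreover have "\<forall>i\<le>Suc n. g i \<in> C" using f assms(2) by (auto simp: g_def le_Suc_eq)
  moreover have "\<forall>i<Suc n. cell_le (g i) (g (Suc i)) \<or> cell_le (g (Suc i)) (g i)"
    using f assms(3) by (auto simp: g_def less_Suc_eq)
  ultimately show ?thesis unfolding chain_def by blast
qed

lemma forward:
  fixes K :: "'a::euclidean_space set set"
  assumes K: "simplicial_complex K" and x: "x \<in> polyhedron K"
    and E1: "\<And>c y. c \<in> cells K \<Longrightarrow> y \<in> c \<Longrightarrow> F1 y = G1 c"
    and E2: "\<And>c y. c \<in> cells K \<Longrightarrow> y \<in> c \<Longrightarrow> F2 y = G2 c"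
    and tp: "top_path K x \<pi>" and F2: "F2 (\<pi> 1)" and F1: "\<forall>r\<in>{0..<1}. F1 (\<pi> r)"
  shows "\<exists>l \<rho>. pm_path (cells K) cell_le (cell_of K x) l \<rho> \<and> G2 (\<rho> l) \<and>
       (\<forall>i. 0 < i \<and> i < l \<longrightarrow> G1 (\<rho> i))"
proof -
  have cont: "continuous_on {0..1} \<pi>" and img: "\<pi> ` {0..1} \<subseteq> polyhedron K" and p0: "\<pi> 0 = x"
    using tp unfolding top_path_def by auto
  define T where "T = \<pi> ` {0..<1}"
  have TP: "T \<subseteq> polyhedron K" using img by (auto simp: T_def)
  define C where "C = {c \<in> cells K. c \<inter> T \<noteq> {}}"
  have fC: "finite C" using finite_cells[OF K] by (simp add: C_def)
  have CK: "C \<subseteq> cells K" by (auto simp: C_def)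
  have G1C: "G1 c" if cC: "c \<in> C" for c
  proof -
    obtain z where z: "z \<in> c" "z \<in> T" using cC by (auto simp: C_def)
    then have "F1 z" using F1 by (auto simp: T_def)
    then show ?thesis using E1[of c z] z cC CK by auto
  qed
  have ofC: "cell_of K y \<in> C \<and> y \<in> cell_of K y" if "y \<in> T" for y
    using cell_of_in[OF K] TP that by (auto simp: C_def)
  define a where "a = cell_of K x"
  have xT: "x \<in> T" using p0 by (force simp: T_def)
  have aC: "a \<in> C" and xa: "x \<in> a" using ofC[OF xT] by (auto simp: a_def)
  have le_refl: "cell_le c c" for c :: "'a set" using closure_subset by (auto simp: cell_le_def)
  have allchain: "chain C a c" if "c \<in> C" for c
  proof (rule ccontr)
    assume nc: "\<not> chain C a c"
    define C1 where "C1 = {c\<in>C. chain C a c}"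
    define C2 where "C2 = C - C1"
    define A where "A = \<Union> (closure ` C1)"
    define B where "B = \<Union> (closure ` C2)"
    have "closed A" unfolding A_def using fC by (intro closed_Union) (auto simp: C1_def)
    moreover have "closed B" unfolding B_def using fC by (intro closed_Union) (auto simp: C2_def)
    moreover have "T \<subseteq> A \<union> B"
    proof
      fix y assume "y \<in> T"
      then have "cell_of K y \<in> C" "y \<in> cell_of K y" using ofC by auto
      then show "y \<in> A \<union> B" unfolding A_def B_def C2_def using closure_subset by blast
    qed
    moreover have "A \<inter> B \<inter> T = {}"
    proof (rule ccontr)
      assume "A \<inter> B \<inter> T \<noteq> {}"
      then obtain y c1 c2 where y: "y \<in> T" "c1 \<in> C1" "c2 \<in> C2" "y \<in> closure c1" "y \<in> closure c2"
        unfolding A_def B_def by blast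
      define e where "e = cell_of K y"
      have e: "e \<in> C" "y \<in> e" using ofC[OF y(1)] by (auto simp: e_def)
      have c12: "c1 \<in> C" "c2 \<in> C" "chain C a c1" "\<not> chain C a c2" using y(2,3) by (auto simp: C1_def C2_def)
      have le1: "cell_le e c1" using cell_le_closure[OF K _ _ e(2) y(4)] e(1) c12 CK by blast
      have le2: "cell_le e c2" using cell_le_closure[OF K _ _ e(2) y(5)] e(1) c12 CK by blast
      have "chain C a e" using chain_step[OF c12(3) e(1)] le1 by blast
      then have "chain C a c2" using chain_step[of C a e c2] c12 le2 by blast
      then show False using c12 by blast
    qed
    moreover have "A \<inter> T \<noteq> {}"
    proof -
      have "a \<in> C1" using aC chain_refl by (auto simp: C1_def)
      then show ?thesis using xa xT closure_subset unfolding A_def by blast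
    qed
    moreover have "B \<inter> T \<noteq> {}"
    proof -
      have "c \<in> C2" using that nc by (auto simp: C1_def C2_def)
      then obtain z where "z \<in> c" "z \<in> T" by (auto simp: C2_def C_def)
      then show ?thesis using \<open>c \<in> C2\<close> closure_subset unfolding B_def by blast
    qed
    moreover have "connected T"
      unfolding T_def by (intro connected_continuous_image continuous_on_subset[OF cont])
        (auto intro: convex_connected)
    ultimately show False unfolding connected_closed by blast
  qed
  have "\<pi> 1 \<in> closure T"
  proof -
    have "\<pi> ` closure {0..<1::real} \<subseteq> closure T"
      by (rule image_closure_subset) (use cont in \<open>auto simp: T_def intro!: closure_subset[THEN subsetD]\<close>)
    then show ?thesis by auto
  qed
  moreover have "closure T \<subseteq> \<Union> (closure ` C)"
  proof (rule closure_minimal)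
    show "T \<subseteq> \<Union> (closure ` C)" using ofC closure_subset by blast
    show "closed (\<Union> (closure ` C))" using fC by auto
  qed
  ultimately obtain d where d: "d \<in> C" "\<pi> 1 \<in> closure d" by blast
  have p1: "\<pi> 1 \<in> polyhedron K" using img by auto
  define e where "e = cell_of K (\<pi> 1)"
  have e: "e \<in> cells K" "\<pi> 1 \<in> e" using cell_of_in[OF K p1] by (auto simp: e_def)
  have ed: "cell_le e d" using cell_le_closure[OF K e(1) _ e(2) d(2)] d(1) CK by blast
  have G2e: "G2 e" using E2[OF e] F2 by simp
  obtain n f where f: "f 0 = a" "f n = d" "\<forall>i\<le>n. f i \<in> C"
    "\<forall>i<n. cell_le (f i) (f (Suc i)) \<or> cell_le (f (Suc i)) (f i)"
    using allchain[OF d(1)] unfolding chain_def by blast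
  define \<rho> where "\<rho> i = (if i = 0 then a else if i \<le> Suc n then f (i - 1) else e)" for i
  have "pm_path (cells K) cell_le (cell_of K x) (Suc (Suc n)) \<rho>"
    unfolding pm_path_def
  proof (intro conjI allI impI)
    show "2 \<le> Suc (Suc n)" by simp
    show "\<rho> 0 = cell_of K x" by (simp add: \<rho>_def a_def)
    show "\<rho> i \<in> cells K" if "i \<le> Suc (Suc n)" for i
      using that f(3) CK aC e(1) by (auto simp: \<rho>_def)
    show "cell_le (\<rho> i) (\<rho> (Suc i)) \<or> cell_le (\<rho> (Suc i)) (\<rho> i)" if iL: "i < Suc (Suc n)" for i
    proof -
      consider "i = 0" | "0 < i" "i \<le> n" | "i = Suc n" using iL by linarith
      then show ?thesis
      proof cases
        case 1 then show ?thesis using f(1) le_refl by (simp add: \<rho>_def)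
      next
        case 2
        then obtain j where j: "i = Suc j" "j < n" by (cases i) auto
        then show ?thesis using f(4) by (simp add: \<rho>_def)
      next
        case 3 then show ?thesis using f(2) ed by (simp add: \<rho>_def)
      qed
    qed
    show "cell_le (\<rho> 0) (\<rho> 1)" using f(1) le_refl by (simp add: \<rho>_def)
    show "cell_le (\<rho> (Suc (Suc n))) (\<rho> (Suc (Suc n) - 1))" using f(2) ed by (simp add: \<rho>_def)
  qed
  moreover have "G2 (\<rho> (Suc (Suc n)))" using G2e by (simp add: \<rho>_def)
  moreover have "\<forall>i. 0 < i \<and> i < Suc (Suc n) \<longrightarrow> G1 (\<rho> i)"
    using f(3) G1C by (auto simp: \<rho>_def)
  ultimately show ?thesis by blast
qed


lemma main:
  fixes K :: "'a::euclidean_space set set" and V :: "'p \<Rightarrow> 'a set"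
  assumes K: "simplicial_complex K" and V: "\<forall>p. \<exists>C. C \<subseteq> cells K \<and> V p = \<Union>C"
  shows "eta_formula \<Phi> \<Longrightarrow> x \<in> polyhedron K \<Longrightarrow>
    sat_poly K V x \<Phi> = sat_poset (cells K) cell_le (cell_val K V) (cell_of K x) (enc \<Phi>)"
proof (induction \<Phi> arbitrary: x)
  case (Atom p)
  obtain C where C: "C \<subseteq> cells K" "V p = \<Union>C" using V by blast
  have xc: "cell_of K x \<in> cells K" "x \<in> cell_of K x" using cell_of_in[OF K Atom(2)] by auto
  have "x \<in> V p \<longleftrightarrow> cell_of K x \<subseteq> V p"
  proof
    assume "x \<in> V p"
    then obtain c where "c \<in> C" "x \<in> c" using C by blast
    then have "cell_of K x = c" using cell_of_eq[OF K] C by blast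
    then show "cell_of K x \<subseteq> V p" using C \<open>c \<in> C\<close> by blast
  qed (use xc in blast)
  then show ?case using xc by (simp add: cell_val_def)
next
  case (Neg f) then show ?case by simp
next
  case (Conj f g) then show ?case by simp
next
  case (Gamma f g) then show ?case by simp
next
  case (Eta f g)
  let ?SP = "sat_poset (cells K) cell_le (cell_val K V)"
  have E1: "sat_poly K V y f = ?SP c (enc f)" if "c \<in> cells K" "y \<in> c" for c y
    using Eta.IH(1)[of y] Eta.prems(1) cells_sub_poly[OF K that(1)] that cell_of_eq[OF K that] by auto
  have E2: "sat_poly K V y g = ?SP c (enc g)" if "c \<in> cells K" "y \<in> c" for c y
    using Eta.IH(2)[of y] Eta.prems(1) cells_sub_poly[OF K that(1)] that cell_of_eq[OF K that] by auto
  have xc: "cell_of K x \<in> cells K" "x \<in> cell_of K x" using cell_of_in[OF K Eta.prems(2)] by auto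
  show ?case
  proof
    assume "sat_poly K V x (Eta f g)"
    then obtain \<pi> where \<pi>: "top_path K x \<pi>" "sat_poly K V (\<pi> 1) g" "\<forall>r\<in>{0..<1}. sat_poly K V (\<pi> r) f"
      by auto
    have "sat_poly K V x f" using \<pi>(1,3) by (force simp: top_path_def)
    then have "?SP (cell_of K x) (enc f)" using E1[OF xc] by simp
    moreover have "\<exists>l \<rho>. pm_path (cells K) cell_le (cell_of K x) l \<rho> \<and> ?SP (\<rho> l) (enc g) \<and>
       (\<forall>i. 0 < i \<and> i < l \<longrightarrow> ?SP (\<rho> i) (enc f))"
      by (rule forward[OF K Eta.prems(2), of "\<lambda>y. sat_poly K V y f" "\<lambda>c. ?SP c (enc f)"
            "\<lambda>y. sat_poly K V y g" "\<lambda>c. ?SP c (enc g)"]) (use E1 E2 \<pi> in auto)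
    ultimately show "?SP (cell_of K x) (enc (Eta f g))" by simp
  next
    assume "?SP (cell_of K x) (enc (Eta f g))"
    then have h1: "?SP (cell_of K x) (enc f)" and
      "\<exists>l \<rho>. pm_path (cells K) cell_le (cell_of K x) l \<rho> \<and> ?SP (\<rho> l) (enc g) \<and>
       (\<forall>i. 0 < i \<and> i < l \<longrightarrow> ?SP (\<rho> i) (enc f))" by auto
    then obtain l \<rho> where \<rho>: "pm_path (cells K) cell_le (cell_of K x) l \<rho>" "?SP (\<rho> l) (enc g)"
       "\<forall>i. 0 < i \<and> i < l \<longrightarrow> ?SP (\<rho> i) (enc f)" by blast
    have "sat_poly K V x f" using E1[OF xc] h1 by simp
    have "\<exists>\<pi>. top_path K x \<pi> \<and> sat_poly K V (\<pi> 1) g \<and> (\<forall>r\<in>{0..<1}. sat_poly K V (\<pi> r) f)"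
      by (rule backward[OF K Eta.prems(2), of "\<lambda>y. sat_poly K V y f" "\<lambda>c. ?SP c (enc f)"
            "\<lambda>y. sat_poly K V y g" "\<lambda>c. ?SP c (enc g)"])
        (use E1 E2 \<rho> \<open>sat_poly K V x f\<close> in auto)
    then show "sat_poly K V x (Eta f g)" by simp
  qed
qed

theorem lemma4:
  fixes K :: "'a::euclidean_space set set" and V :: "'p \<Rightarrow> 'a set"
    and x :: 'a and \<Phi> :: "'p form"
  assumes "polyhedral_model K V"
    and "x \<in> polyhedron K"
    and "eta_formula \<Phi>"
  shows "sat_poly K V x \<Phi> \<longleftrightarrow>
         sat_poset (cells K) cell_le (cell_val K V) (cell_of K x) (enc \<Phi>)"
  using main[of K V \<Phi> x] assms unfolding polyhedral_model_def by blast

end
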